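(* For every $d\in\mathbb N$ there exists a constant $c(d)>0$ such that for every finite nonempty set $Q\subset\mathbb Z^d$, every measurable set $B\subset\mathbb T^d$ with $|B|\le c(d)2^{-4|Q|}|Q|^{-2}$, and every $f\in\mathcal T(Q)$, $$ \|f\|_{L_\infty(\mathbb T^d)}\le12\|f\|_{L_\infty(\mathbb T^d\setminus B)}. $$
   Context: $\mathbb T^d=[0,2\pi)^d$ (the $d$-dimensional torus), $|B|$ denotes the normalized Lebesgue measure $(2\pi)^{-d}\lambda(B)$ of $B$, and $|Q|$ is the cardinality of $Q$. $\mathcal T(Q)=\{f(\mathbf x)=\sum_{\mathbf k\in Q}c_{\mathbf k}e^{i(\mathbf k,\mathbf x)}: c_{\mathbf k}\in\mathbb C\}$. $\|f\|_{L_\infty(S)}=\sup_{\mathbf x\in S}|f(\mathbf x)|$. *)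

theory Defs
  imports "HOL-Analysis.Analysis"
begin

definition torus :: "(real^'n) set" where
  "torus = {x. \<forall>i. 0 \<le> x$i \<and> x$i < 2*pi}"

definition norm_meas :: "(real^'n) set \<Rightarrow> real" where
  "norm_meas B = measure lebesgue B / (2*pi) ^ CARD('n)"

definition kdot :: "int^'n \<Rightarrow> real^'n \<Rightarrow> real" where
  "kdot k x = (\<Sum>i\<in>UNIV. of_int (k$i) * x$i)"

definition trig_polys :: "(int^'n) set \<Rightarrow> (real^'n \<Rightarrow> complex) set" where
  "trig_polys Q = {f. \<exists>c. \<forall>x. f x = (\<Sum>k\<in>Q. c k * exp (\<i> * of_real (kdot k x)))}"

definition sup_norm_on :: "(real^'n) set \<Rightarrow> (real^'n \<Rightarrow> complex) \<Rightarrow> real" where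
  "sup_norm_on S f = (SUP x\<in>S. norm (f x))"

end

theory Submission
  imports Defs
begin

lemma exp_int_1d:
  fixes j :: int
  shows "(\<integral>t. indicator {0..<2*pi} t *\<^sub>R exp (\<i> * of_real (of_int j * t)) \<partial>lborel)
         = (if j = 0 then complex_of_real (2*pi) else 0)"
proof -
  let ?e = "\<lambda>t::real. exp (\<i> * of_real (of_int j * t))"
  have meas: "?e \<in> borel_measurable borel" by measurable
  have si: "set_integrable lborel {0..<2*pi} ?e"
    unfolding set_integrable_def
    by (rule integrableI_bounded_set_indicator[where B=1]) (auto simp: meas norm_exp_i_times)
  have "(\<integral>t. indicator {0..<2*pi} t *\<^sub>R ?e t \<partial>lborel) = integral {0..<2*pi} ?e"
    using set_borel_integral_eq_integral(2)[OF si] by (simp add: set_lebesgue_integral_def)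
  also have "\<dots> = integral {0..2*pi} ?e"
  proof (rule integral_spike_set)
    show "negligible {x \<in> {0..<2 * pi} - {0..2 * pi}. ?e x \<noteq> 0}"
      by (rule negligible_subset[OF negligible_empty]) auto
    show "negligible {x \<in> {0..2 * pi} - {0..<2 * pi}. ?e x \<noteq> 0}"
      by (rule negligible_subset[OF negligible_sing[of "2*pi"]]) auto
  qed
  also have "\<dots> = (if j = 0 then complex_of_real (2*pi) else 0)"
  proof (cases "j = 0")
    case True
    then show ?thesis by (simp add: scaleR_conv_of_real)
  next
    case False
    let ?F = "\<lambda>t::real. exp (\<i> * of_real (of_int j * t)) / (\<i> * of_int j)"
    have "(?e has_integral (?F (2*pi) - ?F 0)) {0..2*pi}"
    proof (rule fundamental_theorem_of_calculus)
      fix x :: real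
      have "((\<lambda>z. exp (\<i> * of_int j * z) / (\<i> * of_int j)) has_field_derivative
              exp (\<i> * of_int j * of_real x)) (at (of_real x))"
        using False by (auto intro!: derivative_eq_intros simp: field_simps)
      from has_vector_derivative_real_field[OF this]
      show "(?F has_vector_derivative ?e x) (at x within {0..2*pi})"
        by (simp add: mult.assoc)
    qed simp
    moreover have "?F (2*pi) - ?F 0 = 0"
    proof -
      have "exp (\<i> * of_real (of_int j * (2*pi))) = 1"
        using exp_integer_2pi[of "of_int j"]
        by (simp add: mult_ac)
      then show ?thesis by simp
    qed
    ultimately show ?thesis using False by (simp add: integral_unique)
  qed
  finally show ?thesis .
qed

definition idx :: "real^'n \<Rightarrow> 'n" where "idx b = (SOME i. b = axis i 1)"

lemma idx_axis[simp]: "idx (axis i (1::real)) = i"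
  unfolding idx_def by (rule some_equality) (auto simp: axis_eq_axis)

lemma Basis_vec_range: "(Basis :: (real^'n::finite) set) = range (\<lambda>i. axis i 1)"
  by (auto simp: Basis_vec_def)

lemma inj_axis1: "inj (\<lambda>i::'n::finite. axis i (1::real))"
  by (auto simp: inj_def axis_eq_axis)

lemma integral_lborel_prod_vec:
  fixes F :: "'n::finite \<Rightarrow> real \<Rightarrow> complex"
  assumes int: "\<And>i. integrable lborel (F i)"
  shows "(\<integral>x. (\<Prod>i\<in>UNIV. F i (x$i)) \<partial>(lborel :: (real^'n) measure)) = (\<Prod>i\<in>UNIV. \<integral>t. F i t \<partial>lborel)"
proof -
  interpret product_sigma_finite "\<lambda>_::real^'n. lborel :: real measure" by standard
  define G where "G b = F (idx b)" for b :: "real^'n"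
  have meas[measurable]: "F i \<in> borel_measurable borel" for i
    using borel_measurable_integrable[OF int[of i]] by simp
  have comp: "(\<Sum>b\<in>Basis. f b *\<^sub>R b) $ i = f (axis i 1)" for f :: "real^'n \<Rightarrow> real" and i
  proof -
    have "(\<Sum>b\<in>Basis. f b *\<^sub>R b) $ i = (\<Sum>b\<in>Basis. f b *\<^sub>R b) \<bullet> axis i 1"
      by (simp add: cart_eq_inner_axis)
    also have "\<dots> = f (axis i 1)"
      by (simp add: inner_sum_left inner_Basis if_distrib[of "\<lambda>t. f _ * t"] sum.delta cong: if_cong)
    finally show ?thesis .
  qed
  have pr: "(\<Prod>i\<in>UNIV. F i (y i)) = (\<Prod>b\<in>Basis. G b (y (idx b)))" for y :: "'n \<Rightarrow> real"
    unfolding Basis_vec_range G_def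
    by (subst prod.reindex[OF inj_axis1]) simp
  have "(\<integral>x. (\<Prod>i\<in>UNIV. F i (x$i)) \<partial>(lborel :: (real^'n) measure))
      = (\<integral>f. (\<Prod>i\<in>UNIV. F i ((\<Sum>b\<in>Basis. f b *\<^sub>R b) $ i)) \<partial>(\<Pi>\<^sub>M b\<in>Basis. lborel))"
    by (subst lborel_eq) (rule integral_distr; measurable)
  also have "\<dots> = (\<integral>f. (\<Prod>b\<in>Basis. G b (f b)) \<partial>(\<Pi>\<^sub>M b\<in>Basis. lborel))"
    by (rule Bochner_Integration.integral_cong[OF refl]) (simp only: comp, simp add: Basis_vec_range G_def prod.reindex[OF inj_axis1])
  also have "\<dots> = (\<Prod>b\<in>Basis. \<integral>t. G b t \<partial>lborel)"
    by (rule product_integral_prod) (auto simp: G_def int)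
  also have "\<dots> = (\<Prod>i\<in>UNIV. \<integral>t. F i t \<partial>lborel)"
    unfolding Basis_vec_range G_def by (subst prod.reindex[OF inj_axis1]) simp
  finally show ?thesis .
qed

lemma torus_borel[measurable]: "(torus :: (real^'n::finite) set) \<in> sets borel"
proof -
  have "torus = (\<Inter>i. {x::real^'n. 0 \<le> x$i}) \<inter> (\<Inter>i. {x::real^'n. x$i < 2*pi})"
    by (auto simp: torus_def)
  also have "\<dots> \<in> sets borel"
    by measurable
  finally show ?thesis .
qed

lemma kdot_0[simp]: "kdot 0 x = 0" by (simp add: kdot_def)
lemma kdot_add: "kdot (a + b) x = kdot a x + kdot b x"
  by (simp add: kdot_def algebra_simps sum.distrib)
lemma kdot_diff: "kdot (a - b) x = kdot a x - kdot b x"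
  by (simp add: kdot_def algebra_simps sum_subtractf)

lemma int_torus_exp:
  fixes k :: "int^'n::finite"
  shows "(\<integral>x. indicator torus x *\<^sub>R exp (\<i> * of_real (kdot k x)) \<partial>lborel)
     = (if k = 0 then complex_of_real ((2*pi) ^ CARD('n)) else 0)"
proof -
  define F where "F i t = indicator {0..<2*pi} t *\<^sub>R exp (\<i> * of_real (of_int (k$i) * t))" for i t
  have eq: "indicator torus x *\<^sub>R exp (\<i> * of_real (kdot k x)) = (\<Prod>i\<in>UNIV. F i (x$i))" for x :: "real^'n"
  proof -
    have "exp (\<i> * of_real (kdot k x)) = (\<Prod>i\<in>UNIV. exp (\<i> * of_real (of_int (k$i) * x$i)))"
      by (simp add: kdot_def sum_distrib_left exp_sum)
    moreover have "(indicator torus x :: real) = (\<Prod>i\<in>UNIV. indicator {0..<2*pi} (x$i))"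
    proof (cases "x \<in> torus")
      case True then show ?thesis by (simp add: torus_def indicator_def)
    next
      case False
      then obtain i where "\<not> (0 \<le> x$i \<and> x$i < 2*pi)" by (auto simp: torus_def)
      then have "(\<Prod>i\<in>UNIV. indicator {0..<2*pi} (x$i) :: real) = 0"
        by (intro prod_zero) (auto simp: indicator_def intro!: bexI[of _ i])
      with False show ?thesis by simp
    qed
    ultimately show ?thesis
      by (simp add: F_def scaleR_conv_of_real prod.distrib)
  qed
  have int: "integrable lborel (F i)" for i
    unfolding F_def
    by (rule integrableI_bounded_set_indicator[where B=1]) (auto simp: norm_exp_i_times)
  have "(\<integral>x. indicator torus x *\<^sub>R exp (\<i> * of_real (kdot k x)) \<partial>lborel)
     = (\<Prod>i\<in>UNIV. \<integral>t. F i t \<partial>lborel)"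
    by (simp only: eq integral_lborel_prod_vec[OF int])
  also have "\<dots> = (\<Prod>i\<in>UNIV. if k$i = 0 then complex_of_real (2*pi) else 0)"
    unfolding F_def by (simp only: exp_int_1d)
  also have "\<dots> = (if k = 0 then complex_of_real ((2*pi) ^ CARD('n)) else 0)"
  proof (cases "k = 0")
    case True then show ?thesis by simp
  next
    case False
    then obtain i where "k$i \<noteq> 0" by (auto simp: vec_eq_iff)
    then have "(\<Prod>i\<in>UNIV. if k$i = 0 then complex_of_real (2*pi) else 0) = 0"
      by (intro prod_zero) (auto intro!: bexI[of _ i])
    then show ?thesis using False by simp
  qed
  finally show ?thesis .
qed

lemma torus_sub_cbox: "(torus :: (real^'n::finite) set) \<subseteq> cbox 0 (\<chi> i. 2*pi)"
  by (auto simp: torus_def mem_box_cart less_imp_le)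

lemma emeasure_torus_fin: "emeasure lborel (torus :: (real^'n::finite) set) < \<infinity>"
proof -
  have "emeasure lborel (torus :: (real^'n::finite) set) \<le> emeasure lborel (cbox 0 (\<chi> i. 2*pi) :: (real^'n) set)"
    by (rule emeasure_mono[OF torus_sub_cbox]) simp
  also have "\<dots> < \<infinity>" by (rule emeasure_lborel_cbox_finite)
  finally show ?thesis .
qed

lemma integrable_torus:
  fixes h :: "real^'n::finite \<Rightarrow> 'b::{banach, second_countable_topology}"
  assumes "h \<in> borel_measurable borel" "\<And>x. x \<in> torus \<Longrightarrow> norm (h x) \<le> B"
  shows "integrable lborel (\<lambda>x. indicator torus x *\<^sub>R h x)"
  by (rule integrableI_bounded_set_indicator[where B=B]) (use assms emeasure_torus_fin in auto)

lemma measure_torus: "measure lborel (torus :: (real^'n::finite) set) = (2*pi) ^ CARD('n)"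
proof -
  have "complex_of_real (measure lborel (torus :: (real^'n::finite) set)) =
     (\<integral>x. indicator torus x *\<^sub>R exp (\<i> * of_real (kdot (0::int^'n) x)) \<partial>lborel)"
    by (simp add: scaleR_conv_of_real)
  also have "\<dots> = complex_of_real ((2*pi) ^ CARD('n))" by (simp only: int_torus_exp) simp
  finally show ?thesis by (simp only: of_real_eq_iff)
qed

lemma exp_kdot_meas[measurable]: "(\<lambda>x. exp (\<i> * of_real (kdot k x))) \<in> borel_measurable borel"
  unfolding kdot_def by measurable

lemma parseval_torus:
  fixes c :: "int^'n::finite \<Rightarrow> complex"
  assumes K: "finite K"
  shows "(\<integral>x. indicator torus x * (cmod (\<Sum>k\<in>K. c k * exp (\<i> * of_real (kdot k x))))\<^sup>2 \<partial>lborel)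
     = (2*pi) ^ CARD('n) * (\<Sum>k\<in>K. (cmod (c k))\<^sup>2)"
proof -
  define e where "e k x = exp (\<i> * of_real (kdot k x))" for k :: "int^'n" and x :: "real^'n"
  define g where "g x = (\<Sum>k\<in>K. c k * e k x)" for x
  have ecnj: "e k x * cnj (e l x) = e (k - l) x" for k l x
    by (simp add: e_def exp_cnj kdot_diff exp_diff[symmetric] algebra_simps exp_minus field_simps)
  have pt: "complex_of_real (indicator torus x * (cmod (g x))\<^sup>2)
      = (\<Sum>k\<in>K. \<Sum>l\<in>K. (c k * cnj (c l)) * (indicator torus x *\<^sub>R e (k - l) x))" for x
  proof -
    have "complex_of_real ((cmod (g x))\<^sup>2) = g x * cnj (g x)"
      by (rule complex_norm_square)
    also have "\<dots> = (\<Sum>k\<in>K. \<Sum>l\<in>K. (c k * cnj (c l)) * e (k - l) x)"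
      unfolding g_def by (simp add: sum_product cnj_sum ecnj[symmetric] algebra_simps)
    finally show ?thesis
      by (simp add: scaleR_conv_of_real sum_distrib_left algebra_simps)
  qed
  have intk: "integrable lborel (\<lambda>x. indicator torus x *\<^sub>R e m x)" for m
    by (rule integrable_torus[where B=1]) (auto simp: e_def norm_exp_i_times)
  have "complex_of_real (\<integral>x. indicator torus x * (cmod (g x))\<^sup>2 \<partial>lborel)
     = (\<integral>x. complex_of_real (indicator torus x * (cmod (g x))\<^sup>2) \<partial>lborel)"
    by (rule integral_complex_of_real[symmetric])
  also have "\<dots> = (\<Sum>k\<in>K. \<Sum>l\<in>K. (c k * cnj (c l)) * (\<integral>x. indicator torus x *\<^sub>R e (k - l) x \<partial>lborel))"
  proof -
    have i1: "integrable lborel (\<lambda>x. (c k * cnj (c l)) * (indicator torus x *\<^sub>R e (k - l) x))" for k l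
      by (rule integrable_mult_right[OF intk])
    have i2: "integrable lborel (\<lambda>x. \<Sum>l\<in>K. (c k * cnj (c l)) * (indicator torus x *\<^sub>R e (k - l) x))" for k
      by (rule Bochner_Integration.integrable_sum[OF i1])
    show ?thesis
      by (simp only: pt Bochner_Integration.integral_sum[OF i2] Bochner_Integration.integral_sum[OF i1] integral_mult_right_zero)
  qed
  also have "\<dots> = (\<Sum>k\<in>K. (c k * cnj (c k)) * complex_of_real ((2*pi) ^ CARD('n)))"
    unfolding e_def int_torus_exp by (intro sum.cong refl) (simp add: if_distrib sum.delta'[OF K] cong: if_cong)
  also have "\<dots> = complex_of_real ((2*pi) ^ CARD('n) * (\<Sum>k\<in>K. (cmod (c k))\<^sup>2))"
    by (simp add: complex_norm_square[symmetric] sum_distrib_left sum_distrib_right mult_ac)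
  finally show ?thesis unfolding g_def e_def by (simp only: of_real_eq_iff)
qed

definition fsums :: "(int^'n) set \<Rightarrow> nat \<Rightarrow> (int^'n) set" where
  "fsums Q N = (\<lambda>a. \<Sum>q\<in>Q. of_nat (a q) *s q) ` {a. sum a Q \<le> N}"

lemma fsums_empty: "fsums {} N = {0}"
  unfolding fsums_def by auto

lemma zero_in_fsums: "0 \<in> fsums Q N"
  unfolding fsums_def by (rule image_eqI[of _ _ "\<lambda>_. 0"]) auto

lemma fsums_insert:
  assumes "finite Q" "q \<notin> Q"
  shows "fsums (insert q Q) N \<subseteq> (\<Union>j\<in>{..N}. (\<lambda>s. of_nat j *s q + s) ` fsums Q (N - j))"
proof
  fix s assume "s \<in> fsums (insert q Q) N"
  then obtain a where a: "sum a (insert q Q) \<le> N" and s: "s = (\<Sum>p\<in>insert q Q. of_nat (a p) *s p)"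
    unfolding fsums_def by auto
  have 1: "a q + sum a Q \<le> N" using a assms by simp
  have 2: "s = of_nat (a q) *s q + (\<Sum>p\<in>Q. of_nat (a p) *s p)" using s assms by simp
  have "(\<Sum>p\<in>Q. of_nat (a p) *s p) \<in> fsums Q (N - a q)"
    unfolding fsums_def using 1 by auto
  then show "s \<in> (\<Union>j\<in>{..N}. (\<lambda>s. of_nat j *s q + s) ` fsums Q (N - j))"
    using 1 2 by (intro UN_I[of "a q"]) auto
qed

lemma geom_aux: "(\<Sum>j\<le>N. (2::nat) ^ (N - j)) < 2 ^ Suc N"
proof (induction N)
  case 0 then show ?case by simp
next
  case (Suc N)
  have "(\<Sum>j\<le>Suc N. (2::nat) ^ (Suc N - j)) = (\<Sum>j\<le>N. 2 ^ (Suc N - j)) + 1"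
    by simp
  also have "(\<Sum>j\<le>N. (2::nat) ^ (Suc N - j)) = 2 * (\<Sum>j\<le>N. 2 ^ (N - j))"
    by (simp add: sum_distrib_left Suc_diff_le)
  finally show ?case using Suc.IH by simp
qed

lemma fsums_card:
  assumes "finite Q"
  shows "finite (fsums Q N) \<and> card (fsums Q N) \<le> 2 ^ (N + card Q)"
  using assms
proof (induction Q arbitrary: N rule: finite_induct)
  case empty then show ?case by (simp add: fsums_empty)
next
  case (insert q Q)
  let ?U = "(\<Union>j\<in>{..N}. (\<lambda>s. of_nat j *s q + s) ` fsums Q (N - j))"
  have sub: "fsums (insert q Q) N \<subseteq> ?U" by (rule fsums_insert[OF insert(1,2)])
  have finU: "finite ?U" using insert(3) by auto
  have "card ?U \<le> (\<Sum>j\<le>N. card ((\<lambda>s. of_nat j *s q + s) ` fsums Q (N - j)))"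
    by (rule card_UN_le) simp
  also have "\<dots> \<le> (\<Sum>j\<le>N. 2 ^ (N - j + card Q))"
  proof (intro sum_mono order_trans[OF card_image_le])
    fix j show "finite (fsums Q (N - j))" using insert(3) by blast
    show "card (fsums Q (N - j)) \<le> 2 ^ (N - j + card Q)" using insert(3) by blast
  qed
  also have "\<dots> = 2 ^ card Q * (\<Sum>j\<le>N. 2 ^ (N - j))"
    unfolding sum_distrib_left by (intro sum.cong refl) (simp add: power_add[symmetric] add.commute)
  also have "\<dots> \<le> 2 ^ card Q * 2 ^ Suc N"
    using geom_aux[of N] by simp
  also have "\<dots> = 2 ^ (N + card (insert q Q))"
    using insert(1,2) by (simp add: power_add)
  finally show ?case using sub finU
    by (meson card_mono finite_subset order_trans)
qed

lemma trig_mono: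
  assumes "f \<in> trig_polys X" "X \<subseteq> Y" "finite Y"
  shows "f \<in> trig_polys Y"
proof -
  obtain c where c: "\<And>x. f x = (\<Sum>k\<in>X. c k * exp (\<i> * of_real (kdot k x)))"
    using assms(1) by (auto simp: trig_polys_def)
  define c' where "c' k = (if k \<in> X then c k else 0)" for k
  have "f x = (\<Sum>k\<in>Y. c' k * exp (\<i> * of_real (kdot k x)))" for x
  proof -
    have "(\<Sum>k\<in>Y. c' k * exp (\<i> * of_real (kdot k x))) = (\<Sum>k\<in>X. c' k * exp (\<i> * of_real (kdot k x)))"
      by (rule sum.mono_neutral_right[OF assms(3) assms(2)]) (auto simp: c'_def)
    also have "\<dots> = f x" unfolding c c'_def by (intro sum.cong refl) auto
    finally show ?thesis by simp
  qed
  then show ?thesis by (auto simp: trig_polys_def)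
qed

lemma trig_mult:
  assumes "finite A" "finite B" "f \<in> trig_polys A" "g \<in> trig_polys B"
  shows "(\<lambda>x. f x * g x) \<in> trig_polys ((\<lambda>(a,b). a + b) ` (A \<times> B))"
proof -
  obtain c where c: "\<And>x. f x = (\<Sum>k\<in>A. c k * exp (\<i> * of_real (kdot k x)))"
    using assms(3) by (auto simp: trig_polys_def)
  obtain d where d: "\<And>x. g x = (\<Sum>k\<in>B. d k * exp (\<i> * of_real (kdot k x)))"
    using assms(4) by (auto simp: trig_polys_def)
  let ?h = "\<lambda>(a::int^'a, b). a + b"
  define e where "e s = (\<Sum>p\<in>{p \<in> A \<times> B. ?h p = s}. c (fst p) * d (snd p))" for s
  have "f x * g x = (\<Sum>s\<in>?h ` (A \<times> B). e s * exp (\<i> * of_real (kdot s x)))" for x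
  proof -
    have "f x * g x = (\<Sum>p\<in>A \<times> B. c (fst p) * d (snd p) * exp (\<i> * of_real (kdot (?h p) x)))"
      unfolding c d sum_product sum.cartesian_product
      by (intro sum.cong refl) (auto simp: kdot_add exp_add distrib_left algebra_simps)
    also have "\<dots> = (\<Sum>s\<in>?h ` (A \<times> B). \<Sum>p\<in>{p \<in> A \<times> B. ?h p = s}. c (fst p) * d (snd p) * exp (\<i> * of_real (kdot (?h p) x)))"
      by (rule sum.image_gen) (use assms in auto)
    also have "\<dots> = (\<Sum>s\<in>?h ` (A \<times> B). e s * exp (\<i> * of_real (kdot s x)))"
      unfolding e_def sum_distrib_right by (intro sum.cong refl) auto
    finally show ?thesis .
  qed
  then show ?thesis by (auto simp: trig_polys_def)
qed

lemma fsums_step: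
  assumes "finite Q"
  shows "(\<lambda>(a,b). a + b) ` (fsums Q N \<times> Q) \<subseteq> fsums Q (Suc N)"
proof clarify
  fix s q assume s: "s \<in> fsums Q N" and q: "q \<in> Q"
  then obtain a where a: "sum a Q \<le> N" and s: "s = (\<Sum>p\<in>Q. of_nat (a p) *s p)"
    unfolding fsums_def by auto
  define a' where "a' p = a p + (if p = q then 1 else 0)" for p
  have "sum a' Q = sum a Q + 1"
    using q assms by (simp add: a'_def sum.distrib)
  moreover have "(\<Sum>p\<in>Q. of_nat (a' p) *s p) = s + q"
  proof -
    have "(\<Sum>p\<in>Q. of_nat (a' p) *s p) = (\<Sum>p\<in>Q. of_nat (a p) *s p + (if p = q then p else 0))"
      by (intro sum.cong refl) (simp add: a'_def vector_sadd_rdistrib)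
    also have "\<dots> = s + q" using q assms by (simp add: sum.distrib s)
    finally show ?thesis .
  qed
  ultimately show "s + q \<in> fsums Q (Suc N)"
    unfolding fsums_def using a by (intro image_eqI[of _ _ a']) auto
qed

lemma trig_power:
  assumes "finite Q" "f \<in> trig_polys Q"
  shows "(\<lambda>x. f x ^ N) \<in> trig_polys (fsums Q N)"
proof (induction N)
  case 0
  have "fsums Q 0 = {0}"
  proof -
    have "(\<Sum>p\<in>Q. of_nat (a p) *s p) = 0" if "sum a Q \<le> 0" for a :: "int^'a \<Rightarrow> nat"
      using that assms(1) by (intro sum.neutral) auto
    then show ?thesis using zero_in_fsums[of Q 0] unfolding fsums_def by blast
  qed
  then show ?case by (auto simp: trig_polys_def intro!: exI[of _ "\<lambda>_. 1"])
next
  case (Suc N)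
  have fin: "finite (fsums Q N)" "finite (fsums Q (Suc N))" using fsums_card[OF assms(1)] by auto
  have "(\<lambda>x. f x ^ N * f x) \<in> trig_polys ((\<lambda>(a,b). a + b) ` (fsums Q N \<times> Q))"
    by (rule trig_mult[OF fin(1) assms(1) Suc.IH assms(2)])
  then have "(\<lambda>x. f x ^ N * f x) \<in> trig_polys (fsums Q (Suc N))"
    by (rule trig_mono[OF _ fsums_step[OF assms(1)] fin(2)])
  then show ?case by (simp add: mult.commute)
qed

lemma main_bound:
  fixes Q :: "(int^'n::finite) set" and B :: "(real^'n) set" and f :: "real^'n \<Rightarrow> complex"
  assumes Q: "finite Q" "Q \<noteq> {}" and Bm: "B \<in> sets lebesgue" and Bt: "B \<subseteq> torus"
    and Bs: "measure lebesgue B * 4 * 2 ^ (4 * card Q) \<le> (2*pi) ^ CARD('n)"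
    and f: "f \<in> trig_polys Q"
  shows "sup_norm_on torus f \<le> 12 * sup_norm_on (torus - B) f"
proof -
  define m where "m = card Q"
  have m1: "m \<ge> 1" using Q by (simp add: m_def Suc_le_eq card_gt_0_iff)
  define V where "V = (2*pi) ^ CARD('n)"
  have V0: "V > 0" by (simp add: V_def)
  obtain c where c: "\<And>x. f x = (\<Sum>k\<in>Q. c k * exp (\<i> * of_real (kdot k x)))"
    using f by (auto simp: trig_polys_def)
  define R where "R = (\<Sum>k\<in>Q. cmod (c k))"
  have fR: "norm (f x) \<le> R" for x
  proof -
    have "norm (f x) \<le> (\<Sum>k\<in>Q. norm (c k * exp (\<i> * of_real (kdot k x))))"
      unfolding c by (rule norm_sum)
    also have "\<dots> = R" by (simp add: R_def norm_mult norm_exp_i_times)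
    finally show ?thesis .
  qed
  have bdd: "bdd_above ((\<lambda>x. norm (f x)) ` T)" for T
    using fR by (auto intro!: bdd_aboveI)
  have fmeas[measurable]: "f \<in> borel_measurable borel"
  proof -
    have "f = (\<lambda>x. \<Sum>k\<in>Q. c k * exp (\<i> * of_real (kdot k x)))" using c by auto
    also have "\<dots> \<in> borel_measurable borel" by measurable
    finally show ?thesis .
  qed
  have tne: "torus \<noteq> {}" by (auto simp: torus_def intro!: exI[of _ 0])
  define S where "S = sup_norm_on torus f"
  have fS: "norm (f x) \<le> S" if "x \<in> torus" for x
    unfolding S_def sup_norm_on_def by (rule cSUP_upper[OF that bdd])
  have Bleb: "B \<in> lmeasurable"
    by (rule bounded_set_imp_lmeasurable[OF bounded_subset[OF bounded_cbox] Bm])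
       (use Bt torus_sub_cbox in blast)
  have mt: "measure lebesgue (torus :: (real^'n) set) = V"
    using measure_torus by (simp add: V_def)
  have B_lt: "measure lebesgue B < V"
  proof -
    have "(2::real) ^ (4 * card Q) \<ge> 1" by simp
    moreover have "measure lebesgue B \<ge> 0" by simp
    ultimately have "measure lebesgue B * 1 \<le> measure lebesgue B * 2 ^ (4 * card Q)"
      by (intro mult_left_mono) auto
    then have "measure lebesgue B * 4 \<le> measure lebesgue B * 4 * 2 ^ (4 * card Q)" by simp
    then have "measure lebesgue B * 4 \<le> V" unfolding V_def using Bs by linarith
    then show ?thesis using V0 \<open>measure lebesgue B \<ge> 0\<close> by linarith
  qed
  have mono_B: "measure lebesgue A \<le> measure lebesgue B" if "A \<subseteq> B" "A \<in> sets lebesgue" for A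
    by (rule measure_mono_fmeasurable[OF that Bleb])
  obtain y0 where y0: "y0 \<in> torus - B"
  proof -
    have "\<not> torus \<subseteq> B"
    proof
      assume "torus \<subseteq> B"
      from mono_B[OF this] have "V \<le> measure lebesgue B" using mt by simp
      with B_lt show False by simp
    qed
    then show ?thesis using that by blast
  qed
  have supB0: "0 \<le> sup_norm_on (torus - B) f"
    unfolding sup_norm_on_def
    by (rule order_trans[OF norm_ge_zero cSUP_upper[OF y0 bdd]])
  show ?thesis
  proof (cases "S > 0")
    case False
    then show ?thesis using supB0 by (simp add: S_def)
  next
    case Spos: True
    have "S / 2 < S" using Spos by simp
    then obtain x0 where x0: "x0 \<in> torus" "S / 2 < norm (f x0)"
      unfolding S_def sup_norm_on_def using less_cSUP_iff[OF tne bdd] by (metis S_def sup_norm_on_def)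
    define K where "K = fsums Q m"
    have Kfin: "finite K" and Kcard: "card K \<le> 2 ^ (2*m)"
      using fsums_card[OF Q(1), of m] by (auto simp: K_def m_def mult_2)
    have Kpos: "card K > 0" using Kfin zero_in_fsums[of Q m] by (auto simp: K_def card_gt_0_iff)
    define g where "g x = f x ^ m" for x
    have "g \<in> trig_polys K" unfolding g_def K_def by (rule trig_power[OF Q(1) f])
    then obtain d where d: "\<And>x. g x = (\<Sum>k\<in>K. d k * exp (\<i> * of_real (kdot k x)))"
      by (auto simp: trig_polys_def)
    have gmeas[measurable]: "g \<in> borel_measurable borel" unfolding g_def by measurable
    define I where "I = (\<integral>x. indicator torus x * (cmod (g x))\<^sup>2 \<partial>lborel)"
    have Ieq: "I = V * (\<Sum>k\<in>K. (cmod (d k))\<^sup>2)"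
      unfolding I_def V_def d by (rule parseval_torus[OF Kfin])
    define P where "P = (cmod (g x0))\<^sup>2"
    have F1: "V * P \<le> real (card K) * I"
    proof -
      have "cmod (g x0) \<le> (\<Sum>k\<in>K. norm (d k * exp (\<i> * of_real (kdot k x0))))"
        unfolding d by (rule norm_sum)
      also have "\<dots> = (\<Sum>k\<in>K. cmod (d k))" by (simp add: norm_mult norm_exp_i_times)
      finally have "P \<le> (\<Sum>k\<in>K. cmod (d k))\<^sup>2"
        unfolding P_def by (intro power_mono) auto
      also have "\<dots> \<le> (\<Sum>k\<in>K. (cmod (d k))\<^sup>2) * real (card K)"
        by (rule sum_squared_le_sum_of_squares)
      finally have "P \<le> (\<Sum>k\<in>K. (cmod (d k))\<^sup>2) * real (card K)" .
      then have "V * P \<le> V * ((\<Sum>k\<in>K. (cmod (d k))\<^sup>2) * real (card K))"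
        using V0 by (intro mult_left_mono) auto
      then show ?thesis by (simp add: Ieq mult_ac)
    qed
    define \<theta> where "\<theta> = P / (2 * real (card K))"
    define A where "A = {x \<in> torus. \<theta> \<le> (cmod (g x))\<^sup>2}"
    have Ameas[measurable]: "A \<in> sets borel"
    proof -
      have "A = torus \<inter> {x. \<theta> \<le> (cmod (g x))\<^sup>2}" by (auto simp: A_def)
      also have "\<dots> \<in> sets borel" by measurable
      finally show ?thesis .
    qed
    have Afin: "emeasure lborel A < \<infinity>"
      by (rule le_less_trans[OF emeasure_mono emeasure_torus_fin]) (auto simp: A_def)
    have Tfin: "emeasure lborel (torus :: (real^'n) set) < \<infinity>" by (rule emeasure_torus_fin)
    define L where "L = S ^ (2*m)"
    have gL: "(cmod (g x))\<^sup>2 \<le> L" if "x \<in> torus" for x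
    proof -
      have "(cmod (g x))\<^sup>2 = norm (f x) ^ (2*m)"
        by (simp add: g_def norm_power power_mult[symmetric] mult.commute)
      also have "\<dots> \<le> S ^ (2*m)" by (intro power_mono fS[OF that]) auto
      finally show ?thesis by (simp add: L_def)
    qed
    have F2: "I \<le> L * measure lborel A + \<theta> * V"
    proof -
      have "I \<le> (\<integral>x. L * indicator A x + \<theta> * indicator torus x \<partial>lborel)"
        unfolding I_def
      proof (rule integral_mono)
        show "integrable lborel (\<lambda>x. indicator torus x * (cmod (g x))\<^sup>2)"
          using integrable_torus[of "\<lambda>x. (cmod (g x))\<^sup>2" L] gL by simp
        show "integrable lborel (\<lambda>x. L * indicator A x + \<theta> * indicator torus x)"
          using Afin Tfin by (intro Bochner_Integration.integrable_add integrable_mult_right integrable_real_indicator) auto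
        fix x
        show "indicator torus x * (cmod (g x))\<^sup>2 \<le> L * indicator A x + \<theta> * indicator torus x"
        proof (cases "x \<in> torus")
          case True
          have "0 \<le> \<theta>" by (simp add: \<theta>_def P_def)
          then show ?thesis using True gL[OF True] by (auto simp: A_def indicator_def)
        next
          case False
          then show ?thesis by (simp add: A_def indicator_def)
        qed
      qed
      also have "\<dots> = L * measure lborel A + \<theta> * V"
        using Afin Tfin measure_torus
        by (subst Bochner_Integration.integral_add) (auto simp: V_def intro!: integrable_mult_right integrable_real_indicator)
      finally show ?thesis .
    qed
    have L0: "L > 0" using Spos by (simp add: L_def)
    have F3: "L < 2 ^ (2*m) * P"
    proof -
      have "(S/2) ^ (2*m) < norm (f x0) ^ (2*m)"
        using x0(2) Spos m1 by (intro power_strict_mono) auto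
      moreover have "norm (f x0) ^ (2*m) = P"
        by (simp add: P_def g_def norm_power power_mult[symmetric] mult.commute)
      moreover have "(S/2) ^ (2*m) = L / 2 ^ (2*m)" by (simp add: L_def power_divide)
      ultimately show ?thesis by (simp add: field_simps)
    qed
    have kk: "real (card K) \<le> 2 ^ (2*m)" using Kcard by (metis of_nat_le_iff of_nat_numeral of_nat_power)
    have kk0: "real (card K) > 0" using Kpos by simp
    have F4: "V * P \<le> 2 * real (card K) * L * measure lborel A"
    proof -
      have e1: "real (card K) * (L * measure lborel A + \<theta> * V) = real (card K) * L * measure lborel A + V * P / 2"
        using kk0 by (simp add: \<theta>_def field_simps)
      have "real (card K) * I \<le> real (card K) * (L * measure lborel A + \<theta> * V)"
        using F2 kk0 by (intro mult_left_mono) auto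
      then have "V * P \<le> real (card K) * L * measure lborel A + V * P / 2" using F1 e1 by linarith
      then show ?thesis by linarith
    qed
    have AB: "measure lborel A > measure lebesgue B"
    proof -
      have "V * L < V * (2 ^ (2*m) * P)" using F3 V0 by simp
      also have "\<dots> = 2 ^ (2*m) * (V * P)" by simp
      also have "\<dots> \<le> 2 ^ (2*m) * (2 * real (card K) * L * measure lborel A)"
        using F4 by (intro mult_left_mono) auto
      also have "\<dots> \<le> 2 ^ (2*m) * (2 * 2 ^ (2*m) * L * measure lborel A)"
        using kk L0 by (intro mult_left_mono mult_right_mono) auto
      finally have "V * L < L * (2 * 2 ^ (2*m) * 2 ^ (2*m) * measure lborel A)" by (simp add: mult_ac)
      then have "V < 2 * 2 ^ (2*m) * 2 ^ (2*m) * measure lborel A"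
        using L0 by (simp add: mult.commute[of V])
      then have V2: "V < 2 * 2 ^ (4*m) * measure lborel A"
        by (simp add: power_add[symmetric] mult_ac)
      have "measure lebesgue B * 4 * 2 ^ (4 * m) \<le> V" using Bs by (simp add: V_def m_def)
      with V2 have "measure lebesgue B * 4 * 2 ^ (4 * m) < 2 * 2 ^ (4*m) * measure lborel A" by linarith
      then have "2 ^ (4*m) * (measure lebesgue B * 2) < 2 ^ (4*m) * measure lborel A" by (simp add: mult_ac)
      then have "measure lebesgue B * 2 < measure lborel A" by simp
      then show ?thesis using measure_nonneg[of lebesgue B] by linarith
    qed
    obtain y where y: "y \<in> A" "y \<notin> B"
    proof -
      have "\<not> A \<subseteq> B"
      proof
        assume "A \<subseteq> B"
        from mono_B[OF this] have "measure lebesgue A \<le> measure lebesgue B" by simp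
        moreover have "measure lebesgue A = measure lborel A" by simp
        ultimately show False using AB by simp
      qed
      then show ?thesis using that by blast
    qed
    have "(S/8) ^ (2*m) \<le> norm (f y) ^ (2*m)"
    proof -
      have "(S/8) ^ (2*m) = L / 2 ^ (6*m)" by (simp add: L_def power_divide power_mult)
      also have "\<dots> \<le> L / (2 * 2 ^ (4*m))"
      proof (rule divide_left_mono)
        have "(2::real) * 2 ^ (4*m) \<le> 2 ^ (2*m) * 2 ^ (4*m)"
          using m1 by (intro mult_right_mono) (auto simp: self_le_power)
        also have "\<dots> = 2 ^ (6*m)" by (simp add: power_add[symmetric])
        finally show "(2::real) * 2 ^ (4*m) \<le> 2 ^ (6*m)" .
      qed (use L0 in auto)
      also have "\<dots> \<le> \<theta>"
      proof -
        have "L / (2 * 2 ^ (4*m)) = (L / 2^(2*m)) / (2 * 2^(2*m))"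
          by (simp add: power_add[symmetric])
        also have "\<dots> \<le> P / (2 * real (card K))"
        proof (rule frac_le)
          show "L / 2 ^ (2*m) \<le> P" using F3 by (simp add: field_simps)
          show "0 < 2 * real (card K)" using kk0 by simp
          show "2 * real (card K) \<le> 2 * 2 ^ (2*m)" using kk by simp
        qed (use F3 L0 in \<open>auto simp: P_def\<close>)
        finally show ?thesis by (simp add: \<theta>_def)
      qed
      also have "\<dots> \<le> (cmod (g y))\<^sup>2" using y by (simp add: A_def)
      also have "\<dots> = norm (f y) ^ (2*m)"
        by (simp add: g_def norm_power power_mult[symmetric] mult.commute)
      finally show ?thesis .
    qed
    then have "S/8 \<le> norm (f y)"
      using Spos m1 by (subst (asm) power_mono_iff) auto
    also have "norm (f y) \<le> sup_norm_on (torus - B) f"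
      unfolding sup_norm_on_def using y by (intro cSUP_upper[OF _ bdd]) (auto simp: A_def)
    finally show ?thesis using supB0 by (simp add: S_def)
  qed
qed

theorem theorem5p4:
  shows "\<exists>C::real. C > 0 \<and>
    (\<forall>(Q::(int^'n) set) (B::(real^'n) set) f.
       finite Q \<longrightarrow> Q \<noteq> {} \<longrightarrow>
       B \<in> sets lebesgue \<longrightarrow> B \<subseteq> torus \<longrightarrow>
       norm_meas B \<le> C * 2 powr (- 4 * real (card Q)) * real (card Q) powr (-2) \<longrightarrow>
       f \<in> trig_polys Q \<longrightarrow>
       sup_norm_on torus f \<le> 12 * sup_norm_on (torus - B) f)"
proof (intro exI[of _ "1/4"] conjI allI impI)
  show "(0::real) < 1/4" by simp
next
  fix Q :: "(int^'n) set" and B :: "(real^'n) set" and f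
  assume Q: "finite Q" "Q \<noteq> {}" and Bm: "B \<in> sets lebesgue" and Bt: "B \<subseteq> torus"
    and nm: "norm_meas B \<le> 1/4 * 2 powr (- 4 * real (card Q)) * real (card Q) powr (-2)"
    and f: "f \<in> trig_polys Q"
  define m where "m = card Q"
  have m1: "real m \<ge> 1" using Q by (simp add: m_def Suc_le_eq card_gt_0_iff)
  define V where "V = (2*pi) ^ CARD('n)"
  have V0: "V > 0" by (simp add: V_def)
  have p1: "2 powr (- 4 * real m) = 1 / 2 ^ (4*m)"
    by (simp add: powr_minus_divide powr_realpow[symmetric])
  have p2: "real m powr (-2) \<le> 1"
  proof -
    have "real m powr (-2) \<le> real m powr 0" by (rule powr_mono) (use m1 in auto)
    then show ?thesis using m1 by simp
  qed
  have "measure lebesgue B / V \<le> 1/4 * (1 / 2 ^ (4*m)) * real m powr (-2)"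
  proof -
    have a: "norm_meas B = measure lebesgue B / V" by (simp add: norm_meas_def V_def)
    show ?thesis using nm unfolding a p1[unfolded m_def] m_def .
  qed
  also have "\<dots> \<le> 1/4 * (1 / 2 ^ (4*m)) * 1"
    by (intro mult_left_mono p2) auto
  finally have "measure lebesgue B / V \<le> 1 / (4 * 2 ^ (4*m))" by simp
  then have "measure lebesgue B * 4 * 2 ^ (4 * card Q) \<le> (2*pi) ^ CARD('n)"
    using V0 by (simp add: field_simps V_def m_def)
  then show "sup_norm_on torus f \<le> 12 * sup_norm_on (torus - B) f"
    by (rule main_bound[OF Q Bm Bt _ f])
qed

end
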